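(* $$\sigma(4,3)=120\lambda(7)-96\lambda(2)\lambda(5),\qquad \sigma(3,4)=-80\lambda(7)+8\lambda(3)\lambda(4)+\frac{176}{3}\lambda(2)\lambda(5).$$
   Context: For integers $t\geq 1$, $n\geq 1$ let $S_n^{(t)}=\sum_{k=1}^{n}\frac{1}{(2k-1)^t}$, and for integers $s\geq 2$, $t\geq 1$ let $\sigma(s,t)=\sum_{n\geq 1}\frac{S_n^{(t)}}{n^s}$. For real $s>1$, $\lambda(s)=\sum_{n\geq 1}\frac{1}{(2n-1)^s}$. *)

theory Defs
  imports "HOL-Analysis.Analysis"
begin

definition oddS :: "nat \<Rightarrow> nat \<Rightarrow> real" where
  "oddS t n = (\<Sum>k=1..n. 1 / (2 * real k - 1) ^ t)"

definition sigma :: "nat \<Rightarrow> nat \<Rightarrow> real" where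
  "sigma s t = (\<Sum>n. oddS t (n + 1) / (real (n + 1)) ^ s)"

definition dlambda :: "real \<Rightarrow> real" where
  "dlambda s = (\<Sum>n. 1 / (2 * real n + 1) powr s)"

end

theory Submission
  imports Defs "HOL-Real_Asymp.Real_Asymp"
begin


definition od :: "nat \<Rightarrow> real" where "od i = 2 * real i + 1"
definition ev :: "nat \<Rightarrow> real" where "ev i = 2 * real i + 2"

lemma od_pos[simp]: "od i > 0" by (simp add: od_def)
lemma ev_pos[simp]: "ev i > 0" by (simp add: ev_def)
lemma od_nz[simp]: "od i \<noteq> 0" using od_pos[of i] by linarith
lemma ev_nz[simp]: "ev i \<noteq> 0" using ev_pos[of i] by linarith

lemma summable_sq_shift: "summable (\<lambda>i. 1 / (real i + 1) ^ 2)"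
proof -
  have "summable (\<lambda>n. inverse (real n ^ 2))" by (rule inverse_power_summable) auto
  hence "summable (\<lambda>n. inverse (real (n + 1) ^ 2))" by (subst summable_iff_shift) 
  thus ?thesis by (simp add: divide_inverse add.commute)
qed

lemma od_ge: "od i \<ge> real i + 1" by (simp add: od_def)
lemma ev_ge: "ev i \<ge> real i + 1" by (simp add: ev_def)

lemma summable_od: assumes "k \<ge> 2" shows "summable (\<lambda>i. 1 / od i ^ k)"
proof (rule summable_comparison_test'[OF summable_sq_shift, of 0])
  fix n :: nat
  have "(real n + 1) ^ 2 \<le> (real n + 1) ^ k" by (rule power_increasing) (use assms in auto)
  also have "\<dots> \<le> od n ^ k" by (rule power_mono) (use od_ge in auto)
  finally show "norm (1 / od n ^ k) \<le> 1 / (real n + 1) ^ 2"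
    by (auto intro!: divide_left_mono simp: abs_of_pos)
qed

lemma summable_ev: assumes "k \<ge> 2" shows "summable (\<lambda>i. 1 / ev i ^ k)"
proof (rule summable_comparison_test'[OF summable_sq_shift, of 0])
  fix n :: nat
  have "(real n + 1) ^ 2 \<le> (real n + 1) ^ k" by (rule power_increasing) (use assms in auto)
  also have "\<dots> \<le> ev n ^ k" by (rule power_mono) (use ev_ge in auto)
  finally show "norm (1 / ev n ^ k) \<le> 1 / (real n + 1) ^ 2"
    by (auto intro!: divide_left_mono simp: abs_of_pos)
qed

definition L :: "nat \<Rightarrow> real" where "L k = (\<Sum>i. 1 / od i ^ k)"
definition Z :: "nat \<Rightarrow> real" where "Z k = (\<Sum>i. 1 / ev i ^ k)"

lemma sums_L: "k \<ge> 2 \<Longrightarrow> (\<lambda>i. 1 / od i ^ k) sums L k"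
  unfolding L_def using summable_od by (simp add: summable_sums)
lemma sums_Z: "k \<ge> 2 \<Longrightarrow> (\<lambda>i. 1 / ev i ^ k) sums Z k"
  unfolding Z_def using summable_ev by (simp add: summable_sums)

lemma dlambda_L: "dlambda (numeral k) = L (numeral k)"
  unfolding dlambda_def L_def od_def
  by (simp add: powr_numeral add_pos_nonneg)



lemma od_pow_nonneg[simp]: "0 \<le> od i ^ k" by (simp add: less_imp_le)
lemma ev_pow_nonneg[simp]: "0 \<le> ev i ^ k" by (simp add: less_imp_le)

lemma pfD: fixes x y dd :: real assumes "x > 0" "y > 0" "dd > 0"
  shows "1/(x * y * dd) = 1/(y * ((x+y) * dd)) + 1/(x * ((x+y) * dd))"
proof -
  define ss where "ss = x + y"
  have "ss > 0" using assms by (simp add: ss_def)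
  hence "1/(y * (ss * dd)) + 1/(x * (ss * dd)) = (x + y)/(x * y * ss * dd)" using assms by (simp add: field_simps)
  also have "\<dots> = ss/(x * y * ss * dd)" by (simp add: ss_def)
  also have "\<dots> = 1/(x * y * dd)" using assms \<open>ss>0\<close> by (simp add: field_simps)
  finally show ?thesis by (simp add: ss_def)
qed

lemma pf_rec:
  fixes x y :: real assumes "x > 0" "y > 0"
  shows "1 / (x ^ Suc a * y ^ Suc b * (x + y) ^ c) =
         1 / (x ^ a * y ^ Suc b * (x + y) ^ Suc c) + 1 / (x ^ Suc a * y ^ b * (x + y) ^ Suc c)"
proof -
  define dd where "dd = x ^ a * y ^ b * (x + y) ^ c"
  have dd: "dd > 0" using assms by (simp add: dd_def)
  have e1: "x ^ Suc a * y ^ Suc b * (x + y) ^ c = x*y*dd" by (simp add: dd_def algebra_simps)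
  have e2: "x ^ a * y ^ Suc b * (x + y) ^ Suc c = y*((x+y)*dd)" by (simp add: dd_def algebra_simps)
  have e3: "x ^ Suc a * y ^ b * (x + y) ^ Suc c = x*((x+y)*dd)" by (simp add: dd_def algebra_simps)
  show ?thesis unfolding e1 e2 e3 by (rule pfD[OF assms dd])
qed

lemma has_sum_prod_nonneg:
  fixes f g :: "nat \<Rightarrow> real"
  assumes "f sums F" "g sums G" "\<And>i. f i \<ge> 0" "\<And>j. g j \<ge> 0"
  shows "((\<lambda>(i,j). f i * g j) has_sum (F * G)) UNIV"
proof -
  have hf: "(f has_sum F) UNIV" by (rule sums_nonneg_imp_has_sum) (use assms in auto)
  have hg: "(g has_sum G) UNIV" by (rule sums_nonneg_imp_has_sum) (use assms in auto)
  have rows: "((\<lambda>j. f i * g j) has_sum (f i * G)) UNIV" for i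
    by (rule has_sum_cmult_right[OF hg])
  have col: "((\<lambda>i. f i * G) has_sum (F * G)) UNIV"
    using has_sum_cmult_left[OF hf, of G] by simp
  have summ: "(\<lambda>(i,j). f i * g j) summable_on Sigma UNIV (\<lambda>_. UNIV)"
    by (rule summable_on_SigmaI[where g="\<lambda>i. f i * G"]) (use rows col assms in \<open>auto intro: has_sum_imp_summable\<close>)
  have "((\<lambda>(i,j). f i * g j) has_sum (F * G)) (Sigma UNIV (\<lambda>_. UNIV))"
    by (rule has_sum_SigmaI[where g="\<lambda>i. f i * G"]) (use rows col summ in auto)
  thus ?thesis by simp
qed

definition tt :: "nat \<Rightarrow> nat \<Rightarrow> nat \<Rightarrow> nat \<times> nat \<Rightarrow> real" where
  "tt a b c = (\<lambda>(i,j). 1 / (od i ^ a * od j ^ b * (od i + od j) ^ c))"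

definition T :: "nat \<Rightarrow> nat \<Rightarrow> nat \<Rightarrow> real" where
  "T a b c = infsum (tt a b c) UNIV"

lemma tt_nonneg: "tt a b c x \<ge> 0"
  by (cases x) (simp add: tt_def add_pos_pos less_imp_le)

lemma tt_summable:
  assumes "c1 + c2 = c" "a + c1 \<ge> 2" "b + c2 \<ge> 2"
  shows "tt a b c summable_on UNIV"
proof -
  have P: "((\<lambda>(i,j). (1 / od i ^ (a + c1)) * (1 / od j ^ (b + c2))) has_sum (L (a+c1) * L (b+c2))) UNIV"
    by (rule has_sum_prod_nonneg[OF sums_L sums_L]) (use assms in auto)
  show ?thesis
  proof (rule summable_on_comparison_test[OF has_sum_imp_summable[OF P]])
    fix x :: "nat \<times> nat"
    obtain i j where x: "x = (i,j)" by (cases x)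
    have "od i ^ c1 * od j ^ c2 \<le> (od i + od j) ^ c1 * (od i + od j) ^ c2"
      by (intro mult_mono power_mono) (auto simp: less_imp_le add_pos_pos)
    also have "\<dots> = (od i + od j) ^ c" using assms(1) by (simp add: power_add[symmetric])
    finally have le: "od i ^ c1 * od j ^ c2 \<le> (od i + od j) ^ c" .
    have "od i ^ (a + c1) * od j ^ (b + c2) = (od i ^ a * od j ^ b) * (od i ^ c1 * od j ^ c2)"
      by (simp add: power_add algebra_simps)
    also have "\<dots> \<le> (od i ^ a * od j ^ b) * (od i + od j) ^ c"
      by (rule mult_left_mono[OF le]) simp
    finally have "od i ^ (a + c1) * od j ^ (b + c2) \<le> od i ^ a * od j ^ b * (od i + od j) ^ c" .
    hence "1 / (od i ^ a * od j ^ b * (od i + od j) ^ c) \<le> 1 / (od i ^ (a + c1) * od j ^ (b + c2))"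
      by (intro divide_left_mono) (auto simp: add_pos_pos)
    thus "tt a b c x \<le> (case x of (i,j) \<Rightarrow> 1 / od i ^ (a + c1) * (1 / od j ^ (b + c2)))"
      by (simp add: x tt_def)
  qed (rule tt_nonneg)
qed

lemma T_rec:
  assumes "tt a (Suc b) (Suc c) summable_on UNIV" "tt (Suc a) b (Suc c) summable_on UNIV"
  shows "T (Suc a) (Suc b) c = T a (Suc b) (Suc c) + T (Suc a) b (Suc c)"
proof -
  have "tt (Suc a) (Suc b) c = (\<lambda>x. tt a (Suc b) (Suc c) x + tt (Suc a) b (Suc c) x)"
  proof
    fix x :: "nat \<times> nat"
    obtain i j where x: "x = (i,j)" by (cases x)
    show "tt (Suc a) (Suc b) c x = tt a (Suc b) (Suc c) x + tt (Suc a) b (Suc c) x"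
      using pf_rec[OF od_pos[of i] od_pos[of j], of a b c] by (simp add: x tt_def)
  qed
  thus ?thesis unfolding T_def using infsum_add[OF assms] by simp
qed

lemma T_swap: "T a b c = T b a c"
proof -
  have "infsum (tt a b c) UNIV = infsum (tt a b c \<circ> prod.swap) UNIV"
    by (rule infsum_reindex_bij_betw[symmetric, unfolded comp_def[symmetric]]) 
        (auto simp: bij_betw_def)
  also have "tt a b c \<circ> prod.swap = tt b a c"
    by (auto simp: tt_def fun_eq_iff add.commute mult.commute mult.left_commute)
  finally show ?thesis by (simp add: T_def)
qed

lemma T_bd: assumes "a \<ge> 2" "b \<ge> 2" shows "T a b 0 = L a * L b"
proof -
  have P: "((\<lambda>(i,j). (1 / od i ^ a) * (1 / od j ^ b)) has_sum (L a * L b)) UNIV"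
    by (rule has_sum_prod_nonneg[OF sums_L sums_L]) (use assms in auto)
  have "tt a b 0 = (\<lambda>(i,j). (1 / od i ^ a) * (1 / od j ^ b))" by (auto simp: tt_def fun_eq_iff)
  thus ?thesis using P by (simp add: T_def infsumI)
qed



lemma diag_le:
  fixes g :: "nat \<Rightarrow> nat \<Rightarrow> real"
  assumes "((\<lambda>(i,j). g i (i+j)) has_sum S) UNIV"
  shows "((\<lambda>n. \<Sum>i\<le>n. g i n) has_sum S) UNIV"
proof -
  have "((\<lambda>(n,i). g i n) has_sum S) (Sigma UNIV (\<lambda>n. {..n}))"
    using assms
    by (subst has_sum_reindex_bij_witness[where i="\<lambda>(i,j). (i+j, i)" and j="\<lambda>(n,i). (i, n-i)"
           and T=UNIV and h="\<lambda>(i,j). g i (i+j)"]) auto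
  thus ?thesis
    by (rule has_sum_Sigma') (auto intro: has_sum_finiteI)
qed

lemma diag_lt:
  fixes g :: "nat \<Rightarrow> nat \<Rightarrow> real"
  assumes "((\<lambda>(k,j). g k (k+j+1)) has_sum S) UNIV"
  shows "((\<lambda>n. \<Sum>k<n. g k n) has_sum S) UNIV"
proof -
  have "((\<lambda>(n,k). g k n) has_sum S) (Sigma UNIV (\<lambda>n. {..<n}))"
    using assms
    by (subst has_sum_reindex_bij_witness[where i="\<lambda>(k,j). (k+j+1, k)" and j="\<lambda>(n,k). (k, n-k-1)"
           and T=UNIV and h="\<lambda>(k,j). g k (k+j+1)"]) auto
  thus ?thesis
    by (rule has_sum_Sigma') (auto intro: has_sum_finiteI)
qed

lemma oddS_eq: "oddS t (Suc n) = (\<Sum>i\<le>n. 1 / od i ^ t)"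
  unfolding oddS_def
proof (induction n)
  case 0 thus ?case by (simp add: od_def)
next
  case (Suc n)
  have "(\<Sum>k = 1..Suc (Suc n). 1 / (2 * real k - 1) ^ t) =
        (\<Sum>k = 1..Suc n. 1 / (2 * real k - 1) ^ t) + 1 / (2 * real (Suc (Suc n)) - 1) ^ t"
    by simp
  also have "1 / (2 * real (Suc (Suc n)) - 1) ^ t = 1 / od (Suc n) ^ t"
    by (simp add: od_def)
  finally show ?case using Suc by simp
qed

lemma sigma_T:
  assumes "tt a 0 c summable_on UNIV"
  shows "sigma c a = 2 ^ c * T a 0 c"
proof -
  define g where "g = (\<lambda>i n. 1 / (od i ^ a * (real n + 1) ^ c))"
  have h: "(tt a 0 c has_sum T a 0 c) UNIV" using assms unfolding T_def by (rule has_sum_infsum)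
  have eq: "(\<lambda>(i,j). g i (i+j)) = (\<lambda>x. 2 ^ c * tt a 0 c x)"
  proof
    fix x :: "nat \<times> nat"
    obtain i j where x: "x = (i,j)" by (cases x)
    have "od i + od j = 2 * (real (i + j) + 1)" by (simp add: od_def)
    hence e: "(od i + od j) ^ c = 2 ^ c * (real (i + j) + 1) ^ c" by (simp only: power_mult_distrib)
    have p: "(real (i + j) + 1) ^ c > 0" by simp
    show "(case x of (i,j) \<Rightarrow> g i (i+j)) = 2 ^ c * tt a 0 c x"
      unfolding x g_def tt_def using p by (simp only: e prod.case) (simp add: field_simps)
  qed
  have "((\<lambda>(i,j). g i (i+j)) has_sum (2 ^ c * T a 0 c)) UNIV"
    unfolding eq by (rule has_sum_cmult_right[OF h])
  hence "((\<lambda>n. \<Sum>i\<le>n. g i n) has_sum (2 ^ c * T a 0 c)) UNIV" by (rule diag_le)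
  hence s: "(\<lambda>n. \<Sum>i\<le>n. g i n) sums (2 ^ c * T a 0 c)" by (rule has_sum_imp_sums)
  have "(\<lambda>n. \<Sum>i\<le>n. g i n) = (\<lambda>n. oddS a (n + 1) / real (n + 1) ^ c)"
    by (auto simp: fun_eq_iff oddS_eq g_def sum_divide_distrib add.commute)
  thus ?thesis using s unfolding sigma_def by (simp add: sums_iff)
qed



lemma od_add_od: "od n + od i = ev (n + i)" by (simp add: od_def ev_def)
lemma od_add_ev: "od n + ev j = od (j + Suc n)" by (simp add: od_def ev_def)
lemma od_sub_od: "k < n \<Longrightarrow> od n - od k = ev (n - Suc k)" by (simp add: od_def ev_def of_nat_diff)

lemma od_lim: "(\<lambda>i. 1 / od (i + m)) \<longlonglongrightarrow> 0"
  unfolding od_def by real_asymp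
lemma ev_lim: "(\<lambda>i. 1 / ev (i + m)) \<longlonglongrightarrow> 0"
  unfolding ev_def by real_asymp

definition A :: "nat \<Rightarrow> nat \<Rightarrow> real" where "A k n = (\<Sum>i<n. 1 / od i ^ k)"
definition E :: "nat \<Rightarrow> nat \<Rightarrow> real" where "E k n = (\<Sum>j<n. 1 / ev j ^ k)"

lemma A_Suc: "A k (Suc n) = A k n + 1 / od n ^ k" by (simp add: A_def)
lemma E_Suc: "E k (Suc n) = E k n + 1 / ev n ^ k" by (simp add: E_def)

lemma harm: "(\<lambda>i. (1 / od i - 1 / ev (n + i)) + (1 / ev i - 1 / od (i + Suc n))) sums (A 1 n + 1 / od n + E 1 n)"
proof (induction n)
  case 0
  have "(\<lambda>i. 1 / od (i + 0) - 1 / od (Suc i + 0)) sums (1 / od (0 + 0) - 0)"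
    using telescope_sums'[OF od_lim[of 0]] by simp
  moreover have "(\<lambda>i. 1 / od (i + 0) - 1 / od (Suc i + 0)) =
      (\<lambda>i. (1 / od i - 1 / ev (0 + i)) + (1 / ev i - 1 / od (i + Suc 0)))" by auto
  ultimately show ?case by (simp add: A_def E_def)
next
  case (Suc n)
  define f where "f i = 1 / ev (i + n) + 1 / od (i + Suc n)" for i
  have fl: "f \<longlonglongrightarrow> 0" unfolding f_def using tendsto_add[OF ev_lim[of n] od_lim[of "Suc n"]] by simp
  have t: "(\<lambda>i. f i - f (Suc i)) sums (f 0 - 0)" by (rule telescope_sums'[OF fl])
  have "(\<lambda>i. ((1 / od i - 1 / ev (n + i)) + (1 / ev i - 1 / od (i + Suc n))) + (f i - f (Suc i)))
        sums ((A 1 n + 1 / od n + E 1 n) + (f 0 - 0))"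
    by (rule sums_add[OF Suc.IH t])
  moreover have "(\<lambda>i. ((1 / od i - 1 / ev (n + i)) + (1 / ev i - 1 / od (i + Suc n))) + (f i - f (Suc i)))
     = (\<lambda>i. (1 / od i - 1 / ev (Suc n + i)) + (1 / ev i - 1 / od (i + Suc (Suc n))))"
    by (auto simp: f_def fun_eq_iff add.commute add.left_commute)
  moreover have "(A 1 n + 1 / od n + E 1 n) + (f 0 - 0) = A 1 (Suc n) + 1 / od (Suc n) + E 1 (Suc n)"
    by (simp add: f_def A_Suc E_Suc)
  ultimately show ?case by simp
qed

lemma pf3a: fixes N q :: real assumes "N > 0" "q > 0"
  shows "1 / (q ^ 3 * (N + q)) = (1/N) * (1/q^3) - (1/N^2) * (1/q^2) + (1/N^3) * (1/q - 1/(N+q))"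
proof -
  define s where "s = N + q"
  have s: "s > 0" using assms by (simp add: s_def)
  have hs: "s = N + q" by (simp add: s_def)
  have "1 / (q ^ 3 * s) = (1/N) * (1/q^3) - (1/N^2) * (1/q^2) + (1/N^3) * (1/q - 1/s)"
    using assms s by (simp add: field_simps) (simp only: hs, algebra)
  thus ?thesis by (simp add: s_def)
qed

lemma pf3b: fixes N e :: real assumes "N > 0" "e > 0"
  shows "1 / ((N + e) ^ 3 * e) = - (1/N) * (1/(N+e)^3) - (1/N^2) * (1/(N+e)^2) + (1/N^3) * (1/e - 1/(N+e))"
proof -
  define s where "s = N + e"
  have s: "s > 0" using assms by (simp add: s_def)
  have hs: "s = N + e" by (simp add: s_def)
  have "1 / (s ^ 3 * e) = - (1/N) * (1/s^3) - (1/N^2) * (1/s^2) + (1/N^3) * (1/e - 1/s)"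
    using assms s by (simp add: field_simps) (simp only: hs, algebra)
  thus ?thesis by (simp add: s_def)
qed

lemma pf3c: fixes N q :: real assumes "N > 0" "q > 0" "q \<noteq> N"
  shows "1 / (q ^ 3 * (N - q)) = (1/N) * (1/q^3) + (1/N^2) * (1/q^2) + (1/N^3) * (1/q + 1/(N-q))"
proof -
  define s where "s = N - q"
  have s: "s \<noteq> 0" using assms by (simp add: s_def)
  have hs: "N = q + s" by (simp add: s_def)
  have "1 / (q ^ 3 * s) = (1/N) * (1/q^3) + (1/N^2) * (1/q^2) + (1/N^3) * (1/q + 1/s)"
    using assms s by (simp add: field_simps) (simp only: hs, algebra)
  thus ?thesis by (simp add: s_def)
qed



definition R1 :: "nat \<Rightarrow> real" where "R1 n = (\<Sum>i. 1 / (od i ^ 3 * (od n + od i)))"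
definition R2 :: "nat \<Rightarrow> real" where "R2 n = (\<Sum>j. 1 / ((od n + ev j) ^ 3 * ev j))"
definition F3 :: "nat \<Rightarrow> real" where "F3 n = (\<Sum>k<n. 1 / (od k ^ 3 * (od n - od k)))"

lemma R1_sums: "(\<lambda>i. 1 / (od i ^ 3 * (od n + od i))) sums R1 n"
proof -
  have "summable (\<lambda>i. 1 / (od i ^ 3 * (od n + od i)))"
  proof (rule summable_comparison_test'[OF summable_od[of 4], of 0])
    fix i :: nat
    have e4: "od i ^ 4 = od i ^ 3 * od i" by (simp add: eval_nat_numeral)
    have "od i ^ 3 * od i \<le> od i ^ 3 * (od n + od i)"
      by (rule mult_left_mono) (auto simp: less_imp_le)
    hence "od i ^ 4 \<le> od i ^ 3 * (od n + od i)" by (simp only: e4)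
    thus "norm (1 / (od i ^ 3 * (od n + od i))) \<le> 1 / od i ^ 4"
      by (simp add: abs_of_pos add_pos_pos divide_left_mono mult_pos_pos)
  qed simp
  thus ?thesis by (simp add: R1_def summable_sums)
qed

lemma R2_sums: "(\<lambda>j. 1 / ((od n + ev j) ^ 3 * ev j)) sums R2 n"
proof -
  have "summable (\<lambda>j. 1 / ((od n + ev j) ^ 3 * ev j))"
  proof (rule summable_comparison_test'[OF summable_ev[of 4], of 0])
    fix j :: nat
    have "ev j ^ 3 \<le> (od n + ev j) ^ 3" by (rule power_mono) (auto simp: less_imp_le)
    hence "ev j ^ 3 * ev j \<le> (od n + ev j) ^ 3 * ev j" by (rule mult_right_mono) (simp add: less_imp_le)
    hence "ev j ^ 4 \<le> (od n + ev j) ^ 3 * ev j" by (simp add: eval_nat_numeral)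
    thus "norm (1 / ((od n + ev j) ^ 3 * ev j)) \<le> 1 / ev j ^ 4"
      by (simp add: abs_of_pos add_pos_pos divide_left_mono mult_pos_pos)
  qed simp
  thus ?thesis by (simp add: R2_def summable_sums)
qed

lemma F3_eq: "F3 n = (1 / od n) * A 3 n + (1 / od n ^ 2) * A 2 n + (1 / od n ^ 3) * (A 1 n + E 1 n)"
proof -
  have "F3 n = (\<Sum>k<n. (1/od n) * (1/od k^3) + (1/od n^2) * (1/od k^2) + (1/od n^3) * (1/od k + 1/(od n - od k)))"
    unfolding F3_def
    by (rule sum.cong[OF refl], rule pf3c) (auto simp: od_def)
  also have "\<dots> = (1/od n) * A 3 n + (1/od n^2) * A 2 n + (1/od n^3) * (A 1 n + (\<Sum>k<n. 1/(od n - od k)))"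
    by (simp add: sum.distrib sum_distrib_left A_def sum_divide_distrib[symmetric])
  also have "(\<Sum>k<n. 1/(od n - od k)) = (\<Sum>k<n. 1 / ev (n - Suc k))"
    by (rule sum.cong) (auto simp: od_sub_od)
  also have "\<dots> = E 1 n" unfolding E_def power_one_right by (rule sum.nat_diff_reindex)
  finally show ?thesis .
qed

lemma pn3: "R1 n + R2 n = F3 n - 2 * L 2 / od n ^ 2 + 3 / od n ^ 4"
proof -
  define N where "N = od n"
  have N: "N > 0" by (simp add: N_def)
  have tm: "1 / (od i ^ 3 * (N + od i)) + 1 / ((N + ev i) ^ 3 * ev i) =
      (1/N) * (1/od i^3) - (1/N) * (1/od (i + Suc n)^3) - (1/N^2) * (1/od i^2)
      - (1/N^2) * (1/od (i + Suc n)^2)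
      + (1/N^3) * ((1 / od i - 1 / ev (n + i)) + (1 / ev i - 1 / od (i + Suc n)))" for i
  proof -
    have a: "N + od i = ev (n + i)" by (simp add: N_def od_add_od)
    have b: "N + ev i = od (i + Suc n)" by (simp add: N_def od_add_ev)
    show ?thesis
      using pf3a[OF N od_pos[of i]] pf3b[OF N ev_pos[of i]]
      unfolding a b by (simp add: algebra_simps)
  qed
  have s1: "(\<lambda>i. 1 / od i ^ 3) sums L 3" by (rule sums_L) simp
  have s2: "(\<lambda>i. 1 / od i ^ 2) sums L 2" by (rule sums_L) simp
  have t1: "(\<lambda>i. 1 / od (i + Suc n) ^ 3) sums (L 3 - A 3 (Suc n))"
    using sums_split_initial_segment[OF s1, of "Suc n"] by (simp add: A_def)
  have t2: "(\<lambda>i. 1 / od (i + Suc n) ^ 2) sums (L 2 - A 2 (Suc n))"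
    using sums_split_initial_segment[OF s2, of "Suc n"] by (simp add: A_def)
  have "(\<lambda>i. (1/N) * (1/od i^3) - (1/N) * (1/od (i + Suc n)^3) - (1/N^2) * (1/od i^2)
      - (1/N^2) * (1/od (i + Suc n)^2)
      + (1/N^3) * ((1 / od i - 1 / ev (n + i)) + (1 / ev i - 1 / od (i + Suc n))))
      sums ((1/N) * L 3 - (1/N) * (L 3 - A 3 (Suc n)) - (1/N^2) * L 2 - (1/N^2) * (L 2 - A 2 (Suc n))
            + (1/N^3) * (A 1 n + 1 / od n + E 1 n))"
    by (intro sums_add sums_diff sums_mult s1 s2 t1 t2 harm)
  hence "(\<lambda>i. 1 / (od i ^ 3 * (N + od i)) + 1 / ((N + ev i) ^ 3 * ev i))
      sums ((1/N) * L 3 - (1/N) * (L 3 - A 3 (Suc n)) - (1/N^2) * L 2 - (1/N^2) * (L 2 - A 2 (Suc n))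
            + (1/N^3) * (A 1 n + 1 / od n + E 1 n))"
    by (simp only: tm)
  moreover have "(\<lambda>i. 1 / (od i ^ 3 * (N + od i)) + 1 / ((N + ev i) ^ 3 * ev i)) sums (R1 n + R2 n)"
    unfolding N_def by (rule sums_add[OF R1_sums R2_sums])
  ultimately have eq: "R1 n + R2 n = (1/N) * L 3 - (1/N) * (L 3 - A 3 (Suc n)) - (1/N^2) * L 2 - (1/N^2) * (L 2 - A 2 (Suc n))
            + (1/N^3) * (A 1 n + 1 / od n + E 1 n)"
    using sums_unique2 by blast
  define x where "x = 1 / N"
  have p: "1 / N ^ k = x ^ k" for k by (simp add: x_def power_one_over)
  have p2: "c / N ^ k = c * x ^ k" for c k by (simp add: x_def power_one_over divide_inverse power_inverse)
  show ?thesis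
    unfolding eq F3_eq A_Suc N_def[symmetric] p p2
    by (simp add: x_def[symmetric] p algebra_simps power2_eq_square power3_eq_cube eval_nat_numeral)
qed



lemma rows_has_sum:
  fixes f :: "nat \<times> nat \<Rightarrow> real"
  assumes "f summable_on UNIV" "\<And>n. ((\<lambda>j. f (n, j)) has_sum r n) UNIV"
  shows "(r has_sum infsum f UNIV) UNIV"
proof -
  have "(f has_sum infsum f UNIV) (Sigma UNIV (\<lambda>_. UNIV))"
    using has_sum_infsum[OF assms(1)] by simp
  thus ?thesis by (rule has_sum_Sigma') (use assms(2) in auto)
qed

lemma hs_L: "k \<ge> 2 \<Longrightarrow> ((\<lambda>i. 1 / od i ^ k) has_sum L k) UNIV"
  by (rule sums_nonneg_imp_has_sum[OF sums_L]) auto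

lemma sums_hs: "f sums s \<Longrightarrow> (\<And>n. f n \<ge> (0::real)) \<Longrightarrow> (f has_sum s) UNIV"
  by (rule sums_nonneg_imp_has_sum)

lemma od_ge0[simp]: "0 \<le> od i" by (simp add: less_imp_le)
lemma ev_ge0[simp]: "0 \<le> ev i" by (simp add: less_imp_le)

definition u3 :: "nat \<times> nat \<Rightarrow> real" where
  "u3 = (\<lambda>(n,j). 1 / (od n ^ 3 * (od n + ev j) ^ 3 * ev j))"

lemma u3_summable: "u3 summable_on UNIV"
proof -
  have P: "((\<lambda>(i,j). (1 / od i ^ 3) * (1 / ev j ^ 4)) has_sum (L 3 * Z 4)) UNIV"
    by (rule has_sum_prod_nonneg[OF sums_L sums_Z]) (auto simp: less_imp_le)
  show ?thesis
  proof (rule summable_on_comparison_test[OF has_sum_imp_summable[OF P]])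
    fix x :: "nat \<times> nat"
    obtain n j where x: "x = (n,j)" by (cases x)
    have "ev j ^ 3 \<le> (od n + ev j) ^ 3" by (rule power_mono) (auto simp: less_imp_le)
    hence "ev j ^ 3 * ev j \<le> (od n + ev j) ^ 3 * ev j" by (rule mult_right_mono) (simp add: less_imp_le)
    hence "ev j ^ 4 \<le> (od n + ev j) ^ 3 * ev j" by (simp add: eval_nat_numeral)
    hence "od n ^ 3 * ev j ^ 4 \<le> od n ^ 3 * ((od n + ev j) ^ 3 * ev j)"
      by (rule mult_left_mono) simp
    hence "1 / (od n ^ 3 * ((od n + ev j) ^ 3 * ev j)) \<le> 1 / (od n ^ 3 * ev j ^ 4)"
      by (intro divide_left_mono) (auto simp: add_pos_pos)
    thus "u3 x \<le> (case x of (i,j) \<Rightarrow> 1 / od i ^ 3 * (1 / ev j ^ 4))"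
      by (simp add: x u3_def mult.assoc)
    show "0 \<le> u3 x" by (simp add: x u3_def add_pos_pos less_imp_le)
  qed
qed

lemma T331: "T 3 3 1 = 3 * L 7 - 2 * L 2 * L 5"
proof -
  define U where "U = infsum u3 UNIV"
  have sT: "tt 3 3 1 summable_on UNIV" by (rule tt_summable[of 0 1]) auto
  have h1: "((\<lambda>n. R1 n / od n ^ 3) has_sum T 3 3 1) UNIV"
    unfolding T_def
  proof (rule rows_has_sum[OF sT])
    fix n
    have "(\<lambda>i. 1 / (od i ^ 3 * (od n + od i)) / od n ^ 3) sums (R1 n / od n ^ 3)"
      by (rule sums_divide[OF R1_sums])
    hence "((\<lambda>i. 1 / (od i ^ 3 * (od n + od i)) / od n ^ 3) has_sum (R1 n / od n ^ 3)) UNIV"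
      by (rule sums_hs) (simp add: add_pos_pos less_imp_le)
    moreover have "(\<lambda>i. 1 / (od i ^ 3 * (od n + od i)) / od n ^ 3) = (\<lambda>j. tt 3 3 1 (n, j))"
      by (auto simp: fun_eq_iff tt_def mult_ac)
    ultimately show "((\<lambda>j. tt 3 3 1 (n, j)) has_sum (R1 n / od n ^ 3)) UNIV" by simp
  qed
  have h2: "((\<lambda>n. R2 n / od n ^ 3) has_sum U) UNIV"
    unfolding U_def
  proof (rule rows_has_sum[OF u3_summable])
    fix n
    have "(\<lambda>j. 1 / ((od n + ev j) ^ 3 * ev j) / od n ^ 3) sums (R2 n / od n ^ 3)"
      by (rule sums_divide[OF R2_sums])
    hence "((\<lambda>j. 1 / ((od n + ev j) ^ 3 * ev j) / od n ^ 3) has_sum (R2 n / od n ^ 3)) UNIV"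
      by (rule sums_hs) (simp add: add_pos_pos less_imp_le)
    moreover have "(\<lambda>j. 1 / ((od n + ev j) ^ 3 * ev j) / od n ^ 3) = (\<lambda>j. u3 (n, j))"
      by (auto simp: fun_eq_iff u3_def mult_ac)
    ultimately show "((\<lambda>j. u3 (n, j)) has_sum (R2 n / od n ^ 3)) UNIV" by simp
  qed
  have h3: "((\<lambda>n. F3 n / od n ^ 3) has_sum U) UNIV"
  proof -
    define g where "g k n = 1 / (od n ^ 3 * od k ^ 3 * (od n - od k))" for k n
    have "((\<lambda>(k,j). g k (k+j+1)) has_sum U) UNIV"
    proof -
      have "(\<lambda>(k,j). g k (k+j+1)) = u3"
      proof
        fix x :: "nat \<times> nat"
        obtain k j where x: "x = (k,j)" by (cases x)
        have a: "od (Suc (k + j)) - od k = ev j" unfolding od_def ev_def by simp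
        have b: "od k + ev j = od (Suc (k + j))" by (simp add: od_def ev_def)
        show "(case x of (k,j) \<Rightarrow> g k (k+j+1)) = u3 x"
          by (simp add: x g_def u3_def a b mult_ac)
      qed
      thus ?thesis using has_sum_infsum[OF u3_summable] by (simp add: U_def)
    qed
    hence "((\<lambda>n. \<Sum>k<n. g k n) has_sum U) UNIV" by (rule diag_lt)
    moreover have "(\<lambda>n. \<Sum>k<n. g k n) = (\<lambda>n. F3 n / od n ^ 3)"
      by (auto simp: fun_eq_iff g_def F3_def sum_divide_distrib mult_ac)
    ultimately show ?thesis by simp
  qed
  have hA: "((\<lambda>n. R1 n / od n ^ 3 + R2 n / od n ^ 3) has_sum (T 3 3 1 + U)) UNIV"
    by (rule has_sum_add[OF h1 h2])
  have hB: "((\<lambda>n. F3 n / od n ^ 3 + (- 2 * L 2) * (1 / od n ^ 5) + 3 * (1 / od n ^ 7))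
                   has_sum (U + (- 2 * L 2) * L 5 + 3 * L 7)) UNIV"
    by (intro has_sum_add has_sum_cmult_right h3 hs_L) auto
  have eqf: "(\<lambda>n. R1 n / od n ^ 3 + R2 n / od n ^ 3) =
                 (\<lambda>n. F3 n / od n ^ 3 + (- 2 * L 2) * (1 / od n ^ 5) + 3 * (1 / od n ^ 7))"
  proof
    fix n
    have "R1 n / od n ^ 3 + R2 n / od n ^ 3 = (R1 n + R2 n) / od n ^ 3" by (simp add: add_divide_distrib)
    also have "\<dots> = (F3 n - 2 * L 2 / od n ^ 2 + 3 / od n ^ 4) / od n ^ 3" by (simp only: pn3)
    also have "\<dots> = F3 n / od n ^ 3 + (- 2 * L 2) * (1 / (od n ^ 2 * od n ^ 3)) + 3 * (1 / (od n ^ 4 * od n ^ 3))"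
      by (simp add: diff_divide_distrib add_divide_distrib)
    also have "od n ^ 2 * od n ^ 3 = od n ^ 5" by (simp flip: power_add)
    also have "od n ^ 4 * od n ^ 3 = od n ^ 7" by (simp flip: power_add)
    finally show "R1 n / od n ^ 3 + R2 n / od n ^ 3 = F3 n / od n ^ 3 + (- 2 * L 2) * (1 / od n ^ 5) + 3 * (1 / od n ^ 7)" .
  qed
  have "T 3 3 1 + U = U + (- 2 * L 2) * L 5 + 3 * L 7"
    using hA unfolding eqf using has_sum_unique[OF _ hB] by blast
  thus ?thesis by simp
qed



lemma pf2a: fixes N q :: real assumes "N > 0" "q > 0"
  shows "1 / (q ^ 2 * (N + q) ^ 3) = - (3/N^4) * (1/q - 1/(N+q)) + (1/N^3) * (1/q^2)
           + (2/N^3) * (1/(N+q)^2) + (1/N^2) * (1/(N+q)^3)"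
proof -
  define s where "s = N + q"
  have s: "s > 0" using assms by (simp add: s_def)
  have hs: "s = N + q" by (simp add: s_def)
  have "1 / (q ^ 2 * s ^ 3) = - (3/N^4) * (1/q - 1/s) + (1/N^3) * (1/q^2)
           + (2/N^3) * (1/s^2) + (1/N^2) * (1/s^3)"
    using assms s by (simp add: field_simps) (simp only: hs, algebra)
  thus ?thesis by (simp add: s_def)
qed

lemma pf2b: fixes N e :: real assumes "N > 0" "e > 0"
  shows "1 / ((N + e) ^ 2 * e ^ 3) = (3/N^4) * (1/e - 1/(N+e)) - (1/N^3) * (1/(N+e)^2)
           - (2/N^3) * (1/e^2) + (1/N^2) * (1/e^3)"
proof -
  define s where "s = N + e"
  have s: "s > 0" using assms by (simp add: s_def)
  have hs: "s = N + e" by (simp add: s_def)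
  have "1 / (s ^ 2 * e ^ 3) = (3/N^4) * (1/e - 1/s) - (1/N^3) * (1/s^2)
           - (2/N^3) * (1/e^2) + (1/N^2) * (1/e^3)"
    using assms s by (simp add: field_simps) (simp only: hs, algebra)
  thus ?thesis by (simp add: s_def)
qed

lemma pf2c: fixes N q :: real assumes "N > 0" "q > 0" "q \<noteq> N"
  shows "1 / (q ^ 2 * (N - q) ^ 3) = (3/N^4) * (1/q + 1/(N-q)) + (1/N^3) * (1/q^2)
           + (2/N^3) * (1/(N-q)^2) + (1/N^2) * (1/(N-q)^3)"
proof -
  define s where "s = N - q"
  have s: "s \<noteq> 0" using assms by (simp add: s_def)
  have hs: "N = q + s" by (simp add: s_def)
  have "1 / (q ^ 2 * s ^ 3) = (3/N^4) * (1/q + 1/s) + (1/N^3) * (1/q^2)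
           + (2/N^3) * (1/s^2) + (1/N^2) * (1/s^3)"
    using assms s by (simp add: field_simps) (simp only: hs, algebra)
  thus ?thesis by (simp add: s_def)
qed

lemma Z2_L2: "Z 2 = L 2 / 3"
proof -
  define h where "h m = inverse (real m ^ 2)" for m :: nat
  have hs: "summable h" unfolding h_def by (rule inverse_power_summable) simp
  define S where "S = suminf h"
  have hS: "h sums S" using hs by (simp add: S_def summable_sums)
  define fo where "fo m = (if odd m then h m else 0)" for m
  define fe where "fe m = (if even m then h m else 0)" for m
  have o1: "(\<lambda>n. fo (2 * n + 1)) sums L 2"
  proof -
    have "(\<lambda>n. fo (2 * n + 1)) = (\<lambda>n. 1 / od n ^ 2)"
      by (auto simp: fun_eq_iff fo_def h_def od_def divide_inverse)
    thus ?thesis using sums_L[of 2] by simp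
  qed
  hence o2: "fo sums L 2"
    by (subst (asm) sums_mono_reindex[of "\<lambda>n. 2 * n + 1"])
       (auto simp: strict_mono_def fo_def elim!: oddE)
  have e1: "(\<lambda>n. fe (2 * n)) sums (S / 4)"
  proof -
    have "(\<lambda>n. fe (2 * n)) = (\<lambda>n. h n / 4)"
      by (auto simp: fun_eq_iff fe_def h_def power_mult_distrib)
    thus ?thesis using sums_divide[OF hS, of 4] by simp
  qed
  hence e2: "fe sums (S / 4)"
    by (subst (asm) sums_mono_reindex[of "\<lambda>n. 2 * n"])
       (auto simp: strict_mono_def fe_def elim!: evenE)
  have "(\<lambda>m. fo m + fe m) sums (L 2 + S / 4)" by (rule sums_add[OF o2 e2])
  moreover have "(\<lambda>m. fo m + fe m) = h" by (auto simp: fun_eq_iff fo_def fe_def)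
  ultimately have "h sums (L 2 + S / 4)" by simp
  hence "S = L 2 + S / 4" using hS sums_unique2 by blast
  hence S: "S = 4 * L 2 / 3" by simp
  have "(\<lambda>j. h (Suc j) / 4) sums (S / 4)"
    using sums_divide[OF hS, of 4] by (subst sums_Suc_iff) (simp add: h_def)
  moreover have "(\<lambda>j. h (Suc j) / 4) = (\<lambda>j. 1 / ev j ^ 2)"
  proof
    fix j
    have "ev j = 2 * real (Suc j)" by (simp add: ev_def)
    hence "ev j ^ 2 = 4 * (real (Suc j)) ^ 2" by (simp only: power_mult_distrib) simp
    thus "h (Suc j) / 4 = 1 / ev j ^ 2" unfolding h_def by (simp only:) (simp add: field_simps)
  qed
  ultimately have "(\<lambda>j. 1 / ev j ^ 2) sums (S / 4)" by simp
  hence "Z 2 = S / 4" using sums_Z[of 2] sums_unique2 by blast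
  thus ?thesis using S by simp
qed



definition Q1 :: "nat \<Rightarrow> real" where "Q1 n = (\<Sum>i. 1 / (od i ^ 2 * (od n + od i) ^ 3))"
definition Q2 :: "nat \<Rightarrow> real" where "Q2 n = (\<Sum>j. 1 / ((od n + ev j) ^ 2 * ev j ^ 3))"
definition F2 :: "nat \<Rightarrow> real" where "F2 n = (\<Sum>k<n. 1 / (od k ^ 2 * (od n - od k) ^ 3))"

lemma Q1_sums: "(\<lambda>i. 1 / (od i ^ 2 * (od n + od i) ^ 3)) sums Q1 n"
proof -
  have "summable (\<lambda>i. 1 / (od i ^ 2 * (od n + od i) ^ 3))"
  proof (rule summable_comparison_test'[OF summable_od[of 5], of 0])
    fix i :: nat
    have "od i ^ 3 \<le> (od n + od i) ^ 3" by (rule power_mono) (auto simp: less_imp_le)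
    hence "od i ^ 2 * od i ^ 3 \<le> od i ^ 2 * (od n + od i) ^ 3" by (rule mult_left_mono) simp
    hence "od i ^ 5 \<le> od i ^ 2 * (od n + od i) ^ 3" by (simp flip: power_add)
    thus "norm (1 / (od i ^ 2 * (od n + od i) ^ 3)) \<le> 1 / od i ^ 5"
      by (simp add: abs_of_pos add_pos_pos divide_left_mono mult_pos_pos)
  qed simp
  thus ?thesis by (simp add: Q1_def summable_sums)
qed

lemma Q2_sums: "(\<lambda>j. 1 / ((od n + ev j) ^ 2 * ev j ^ 3)) sums Q2 n"
proof -
  have "summable (\<lambda>j. 1 / ((od n + ev j) ^ 2 * ev j ^ 3))"
  proof (rule summable_comparison_test'[OF summable_ev[of 5], of 0])
    fix j :: nat
    have "ev j ^ 2 \<le> (od n + ev j) ^ 2" by (rule power_mono) (auto simp: less_imp_le)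
    hence "ev j ^ 2 * ev j ^ 3 \<le> (od n + ev j) ^ 2 * ev j ^ 3" by (rule mult_right_mono) simp
    hence le: "ev j ^ 5 \<le> (od n + ev j) ^ 2 * ev j ^ 3" by (simp flip: power_add)
    have pos: "0 < (od n + ev j) ^ 2 * ev j ^ 3" by (intro mult_pos_pos zero_less_power add_pos_pos) simp_all
    have "1 / ((od n + ev j) ^ 2 * ev j ^ 3) \<le> 1 / ev j ^ 5"
      by (rule divide_left_mono[OF le]) (use pos in auto)
    thus "norm (1 / ((od n + ev j) ^ 2 * ev j ^ 3)) \<le> 1 / ev j ^ 5"
      using pos by (simp add: abs_of_pos)
  qed simp
  thus ?thesis by (simp add: Q2_def summable_sums)
qed

lemma F2_eq: "F2 n = (3 / od n ^ 4) * (A 1 n + E 1 n) + (1 / od n ^ 3) * A 2 n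
                     + (2 / od n ^ 3) * E 2 n + (1 / od n ^ 2) * E 3 n"
proof -
  have "F2 n = (\<Sum>k<n. (3/od n^4) * (1/od k + 1/(od n - od k)) + (1/od n^3) * (1/od k^2)
           + (2/od n^3) * (1/(od n - od k)^2) + (1/od n^2) * (1/(od n - od k)^3))"
    unfolding F2_def
    by (rule sum.cong[OF refl], rule pf2c) (auto simp: od_def)
  also have "\<dots> = (3/od n^4) * ((\<Sum>k<n. 1/od k ^ 1) + (\<Sum>k<n. 1/(od n - od k))) + (1/od n^3) * (\<Sum>k<n. 1/od k ^ 2)
           + (2/od n^3) * (\<Sum>k<n. 1/(od n - od k)^2) + (1/od n^2) * (\<Sum>k<n. 1/(od n - od k)^3)"
    by (simp only: sum.distrib sum_distrib_left distrib_left power_one_right)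
  also have "(\<Sum>k<n. 1/od k ^ 1) = A 1 n" by (simp only: A_def)
  also have "(\<Sum>k<n. 1/od k ^ 2) = A 2 n" by (simp only: A_def)
  also have "(\<Sum>k<n. 1/(od n - od k)) = E 1 n"
  proof -
    have "(\<Sum>k<n. 1/(od n - od k)) = (\<Sum>k<n. 1 / ev (n - Suc k) ^ 1)"
      by (rule sum.cong) (auto simp: od_sub_od)
    also have "\<dots> = E 1 n" unfolding E_def by (rule sum.nat_diff_reindex)
    finally show ?thesis .
  qed
  also have "(\<Sum>k<n. 1/(od n - od k)^2) = E 2 n"
  proof -
    have "(\<Sum>k<n. 1/(od n - od k)^2) = (\<Sum>k<n. 1 / ev (n - Suc k) ^ 2)"
      by (rule sum.cong) (auto simp: od_sub_od)
    also have "\<dots> = E 2 n" unfolding E_def by (rule sum.nat_diff_reindex)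
    finally show ?thesis .
  qed
  also have "(\<Sum>k<n. 1/(od n - od k)^3) = E 3 n"
  proof -
    have "(\<Sum>k<n. 1/(od n - od k)^3) = (\<Sum>k<n. 1 / ev (n - Suc k) ^ 3)"
      by (rule sum.cong) (auto simp: od_sub_od)
    also have "\<dots> = E 3 n" unfolding E_def by (rule sum.nat_diff_reindex)
    finally show ?thesis .
  qed
  finally show ?thesis .
qed

lemma pn2: "Q1 n - Q2 n + F2 n = 10 / 3 * L 2 / od n ^ 3 - 4 / od n ^ 5"
proof -
  define N where "N = od n"
  have N: "N > 0" by (simp add: N_def)
  have tm: "1 / (od i ^ 2 * (N + od i) ^ 3) - 1 / ((N + ev i) ^ 2 * ev i ^ 3) =
      - (3/N^4) * ((1 / od i - 1 / ev (n + i)) + (1 / ev i - 1 / od (i + Suc n)))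
      + (1/N^3) * (1/od i^2) + (2/N^3) * (1/ev (i + n)^2) + (1/N^2) * (1/ev (i + n)^3)
      + (1/N^3) * (1/od (i + Suc n)^2) + (2/N^3) * (1/ev i^2) - (1/N^2) * (1/ev i^3)" for i
  proof -
    have a: "N + od i = ev (n + i)" by (simp add: N_def od_add_od)
    have a2: "ev (i + n) = ev (n + i)" by (simp add: add.commute)
    have b: "N + ev i = od (i + Suc n)" by (simp add: N_def od_add_ev)
    show ?thesis
      unfolding pf2a[OF N od_pos[of i]] pf2b[OF N ev_pos[of i]] by (unfold a b a2) (simp add: algebra_simps add_divide_distrib)
  qed
  have s2: "(\<lambda>i. 1 / od i ^ 2) sums L 2" by (rule sums_L) simp
  have z2: "(\<lambda>i. 1 / ev i ^ 2) sums Z 2" by (rule sums_Z) simp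
  have z3: "(\<lambda>i. 1 / ev i ^ 3) sums Z 3" by (rule sums_Z) simp
  have t2: "(\<lambda>i. 1 / od (i + Suc n) ^ 2) sums (L 2 - A 2 (Suc n))"
    using sums_split_initial_segment[OF s2, of "Suc n"] by (simp add: A_def)
  have tz2: "(\<lambda>i. 1 / ev (i + n) ^ 2) sums (Z 2 - E 2 n)"
    using sums_split_initial_segment[OF z2, of n] by (simp add: E_def)
  have tz3: "(\<lambda>i. 1 / ev (i + n) ^ 3) sums (Z 3 - E 3 n)"
    using sums_split_initial_segment[OF z3, of n] by (simp add: E_def)
  have "(\<lambda>i. - (3/N^4) * ((1 / od i - 1 / ev (n + i)) + (1 / ev i - 1 / od (i + Suc n)))
      + (1/N^3) * (1/od i^2) + (2/N^3) * (1/ev (i + n)^2) + (1/N^2) * (1/ev (i + n)^3)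
      + (1/N^3) * (1/od (i + Suc n)^2) + (2/N^3) * (1/ev i^2) - (1/N^2) * (1/ev i^3))
      sums (- (3/N^4) * (A 1 n + 1 / od n + E 1 n) + (1/N^3) * L 2 + (2/N^3) * (Z 2 - E 2 n)
            + (1/N^2) * (Z 3 - E 3 n) + (1/N^3) * (L 2 - A 2 (Suc n)) + (2/N^3) * Z 2 - (1/N^2) * Z 3)"
    by (intro sums_add sums_diff sums_mult s2 z2 z3 t2 tz2 tz3 harm)
  hence "(\<lambda>i. 1 / (od i ^ 2 * (N + od i) ^ 3) - 1 / ((N + ev i) ^ 2 * ev i ^ 3))
      sums (- (3/N^4) * (A 1 n + 1 / od n + E 1 n) + (1/N^3) * L 2 + (2/N^3) * (Z 2 - E 2 n)
            + (1/N^2) * (Z 3 - E 3 n) + (1/N^3) * (L 2 - A 2 (Suc n)) + (2/N^3) * Z 2 - (1/N^2) * Z 3)"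
    by (simp only: tm)
  moreover have "(\<lambda>i. 1 / (od i ^ 2 * (N + od i) ^ 3) - 1 / ((N + ev i) ^ 2 * ev i ^ 3)) sums (Q1 n - Q2 n)"
    unfolding N_def by (rule sums_diff[OF Q1_sums Q2_sums])
  ultimately have eq: "Q1 n - Q2 n = - (3/N^4) * (A 1 n + 1 / od n + E 1 n) + (1/N^3) * L 2 + (2/N^3) * (Z 2 - E 2 n)
            + (1/N^2) * (Z 3 - E 3 n) + (1/N^3) * (L 2 - A 2 (Suc n)) + (2/N^3) * Z 2 - (1/N^2) * Z 3"
    using sums_unique2 by blast
  define x where "x = 1 / N"
  have p2: "c / N ^ k = c * x ^ k" for c k by (simp add: x_def power_one_over divide_inverse power_inverse)
  show ?thesis
    unfolding eq F2_eq A_Suc N_def[symmetric] p2 Z2_L2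
    by (simp add: x_def[symmetric] algebra_simps eval_nat_numeral)
qed



definition u2 :: "nat \<times> nat \<Rightarrow> real" where
  "u2 = (\<lambda>(n,j). 1 / (od n ^ 2 * (od n + ev j) ^ 2 * ev j ^ 3))"

lemma u2_summable: "u2 summable_on UNIV"
proof -
  have P: "((\<lambda>(i,j). (1 / od i ^ 2) * (1 / ev j ^ 5)) has_sum (L 2 * Z 5)) UNIV"
    by (rule has_sum_prod_nonneg[OF sums_L sums_Z]) (auto simp: less_imp_le)
  show ?thesis
  proof (rule summable_on_comparison_test[OF has_sum_imp_summable[OF P]])
    fix x :: "nat \<times> nat"
    obtain n j where x: "x = (n,j)" by (cases x)
    have "ev j ^ 2 \<le> (od n + ev j) ^ 2" by (rule power_mono) (auto simp: less_imp_le)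
    hence "ev j ^ 2 * ev j ^ 3 \<le> (od n + ev j) ^ 2 * ev j ^ 3" by (rule mult_right_mono) simp
    hence "ev j ^ 5 \<le> (od n + ev j) ^ 2 * ev j ^ 3" by (simp flip: power_add)
    hence le: "od n ^ 2 * ev j ^ 5 \<le> od n ^ 2 * ((od n + ev j) ^ 2 * ev j ^ 3)"
      by (rule mult_left_mono) simp
    have pos: "0 < od n ^ 2 * ev j ^ 5" by simp
    have "1 / (od n ^ 2 * ((od n + ev j) ^ 2 * ev j ^ 3)) \<le> 1 / (od n ^ 2 * ev j ^ 5)"
      by (rule divide_left_mono[OF le]) (simp, intro mult_pos_pos zero_less_power add_pos_pos, simp_all)
    thus "u2 x \<le> (case x of (i,j) \<Rightarrow> 1 / od i ^ 2 * (1 / ev j ^ 5))"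
      by (simp add: x u2_def mult.assoc)
    show "0 \<le> u2 x" by (simp add: x u2_def add_pos_pos less_imp_le)
  qed
qed

lemma T223: "T 2 2 3 = 10 / 3 * L 2 * L 5 - 4 * L 7"
proof -
  define U where "U = infsum u2 UNIV"
  have sT: "tt 2 2 3 summable_on UNIV" by (rule tt_summable[of 1 2]) auto
  have h1: "((\<lambda>n. Q1 n / od n ^ 2) has_sum T 2 2 3) UNIV"
    unfolding T_def
  proof (rule rows_has_sum[OF sT])
    fix n
    have "(\<lambda>i. 1 / (od i ^ 2 * (od n + od i) ^ 3) / od n ^ 2) sums (Q1 n / od n ^ 2)"
      by (rule sums_divide[OF Q1_sums])
    hence "((\<lambda>i. 1 / (od i ^ 2 * (od n + od i) ^ 3) / od n ^ 2) has_sum (Q1 n / od n ^ 2)) UNIV"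
      by (rule sums_hs) (simp add: add_pos_pos less_imp_le)
    moreover have "(\<lambda>i. 1 / (od i ^ 2 * (od n + od i) ^ 3) / od n ^ 2) = (\<lambda>j. tt 2 2 3 (n, j))"
      by (auto simp: fun_eq_iff tt_def mult_ac)
    ultimately show "((\<lambda>j. tt 2 2 3 (n, j)) has_sum (Q1 n / od n ^ 2)) UNIV" by simp
  qed
  have h2: "((\<lambda>n. Q2 n / od n ^ 2) has_sum U) UNIV"
    unfolding U_def
  proof (rule rows_has_sum[OF u2_summable])
    fix n
    have "(\<lambda>j. 1 / ((od n + ev j) ^ 2 * ev j ^ 3) / od n ^ 2) sums (Q2 n / od n ^ 2)"
      by (rule sums_divide[OF Q2_sums])
    hence "((\<lambda>j. 1 / ((od n + ev j) ^ 2 * ev j ^ 3) / od n ^ 2) has_sum (Q2 n / od n ^ 2)) UNIV"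
      by (rule sums_hs) (simp add: add_pos_pos less_imp_le)
    moreover have "(\<lambda>j. 1 / ((od n + ev j) ^ 2 * ev j ^ 3) / od n ^ 2) = (\<lambda>j. u2 (n, j))"
      by (auto simp: fun_eq_iff u2_def mult_ac)
    ultimately show "((\<lambda>j. u2 (n, j)) has_sum (Q2 n / od n ^ 2)) UNIV" by simp
  qed
  have h3: "((\<lambda>n. F2 n / od n ^ 2) has_sum U) UNIV"
  proof -
    define g where "g k n = 1 / (od n ^ 2 * od k ^ 2 * (od n - od k) ^ 3)" for k n
    have "((\<lambda>(k,j). g k (k+j+1)) has_sum U) UNIV"
    proof -
      have "(\<lambda>(k,j). g k (k+j+1)) = u2"
      proof
        fix x :: "nat \<times> nat"
        obtain k j where x: "x = (k,j)" by (cases x)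
        have a: "od (Suc (k + j)) - od k = ev j" unfolding od_def ev_def by simp
        have b: "od k + ev j = od (Suc (k + j))" by (simp add: od_def ev_def)
        show "(case x of (k,j) \<Rightarrow> g k (k+j+1)) = u2 x"
          by (simp add: x g_def u2_def a b mult_ac)
      qed
      thus ?thesis using has_sum_infsum[OF u2_summable] by (simp add: U_def)
    qed
    hence "((\<lambda>n. \<Sum>k<n. g k n) has_sum U) UNIV" by (rule diag_lt)
    moreover have "(\<lambda>n. \<Sum>k<n. g k n) = (\<lambda>n. F2 n / od n ^ 2)"
      by (auto simp: fun_eq_iff g_def F2_def sum_divide_distrib mult_ac)
    ultimately show ?thesis by simp
  qed
  have hA: "((\<lambda>n. Q1 n / od n ^ 2 + (-1) * (Q2 n / od n ^ 2) + F2 n / od n ^ 2) has_sum (T 2 2 3 + (-1) * U + U)) UNIV"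
    by (intro has_sum_add has_sum_cmult_right h1 h2 h3)
  have hB: "((\<lambda>n. (10 / 3 * L 2) * (1 / od n ^ 5) + (- 4) * (1 / od n ^ 7))
                   has_sum ((10 / 3 * L 2) * L 5 + (- 4) * L 7)) UNIV"
    by (intro has_sum_add has_sum_cmult_right hs_L) auto
  have eqf: "(\<lambda>n. Q1 n / od n ^ 2 + (-1) * (Q2 n / od n ^ 2) + F2 n / od n ^ 2) =
                 (\<lambda>n. (10 / 3 * L 2) * (1 / od n ^ 5) + (- 4) * (1 / od n ^ 7))"
  proof
    fix n
    have "Q1 n / od n ^ 2 + (-1) * (Q2 n / od n ^ 2) + F2 n / od n ^ 2 = (Q1 n - Q2 n + F2 n) / od n ^ 2"
      by (simp add: add_divide_distrib diff_divide_distrib)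
    also have "\<dots> = (10 / 3 * L 2 / od n ^ 3 - 4 / od n ^ 5) / od n ^ 2" by (simp only: pn2)
    also have "\<dots> = (10 / 3 * L 2) * (1 / (od n ^ 3 * od n ^ 2)) + (- 4) * (1 / (od n ^ 5 * od n ^ 2))"
      by (simp add: diff_divide_distrib)
    also have "od n ^ 3 * od n ^ 2 = od n ^ 5" by (simp flip: power_add)
    also have "od n ^ 5 * od n ^ 2 = od n ^ 7" by (simp flip: power_add)
    finally show "Q1 n / od n ^ 2 + (-1) * (Q2 n / od n ^ 2) + F2 n / od n ^ 2 =
                  (10 / 3 * L 2) * (1 / od n ^ 5) + (- 4) * (1 / od n ^ 7)" .
  qed
  have "T 2 2 3 + (-1) * U + U = (10 / 3 * L 2) * L 5 + (- 4) * L 7"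
    using hA unfolding eqf using has_sum_unique[OF _ hB] by blast
  thus ?thesis by simp
qed



lemma tt_summ: assumes "a + c \<ge> 2" "b + c \<ge> 2" "a + b + c \<ge> 4"
  shows "tt a b c summable_on UNIV"
proof (cases "a \<ge> 2")
  case True thus ?thesis using assms by (intro tt_summable[of 0 c]) auto
next
  case False thus ?thesis using assms by (intro tt_summable[of "2 - a" "c - (2 - a)"]) auto
qed

theorem mainTheorem20:
  shows "sigma 4 3 = 120 * dlambda 7 - 96 * dlambda 2 * dlambda 5 \<and>
         sigma 3 4 = - 80 * dlambda 7 + 8 * dlambda 3 * dlambda 4 + 176 / 3 * dlambda 2 * dlambda 5"
proof -
  have r1: "T 2 2 3 = T 1 2 4 + T 2 1 4"
    using T_rec[of 1 1 3] tt_summ by (simp add: eval_nat_numeral)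
  have r2: "T 3 1 3 = T 2 1 4 + T 3 0 4"
    using T_rec[of 2 0 3] tt_summ by (simp add: eval_nat_numeral)
  have r3: "T 3 2 2 = T 2 2 3 + T 3 1 3"
    using T_rec[of 2 1 2] tt_summ by (simp add: eval_nat_numeral)
  have r4: "T 3 3 1 = T 2 3 2 + T 3 2 2"
    using T_rec[of 2 2 1] tt_summ by (simp add: eval_nat_numeral)
  have r5: "T 4 1 2 = T 3 1 3 + T 4 0 3"
    using T_rec[of 3 0 2] tt_summ by (simp add: eval_nat_numeral)
  have r6: "T 4 2 1 = T 3 2 2 + T 4 1 2"
    using T_rec[of 3 1 1] tt_summ by (simp add: eval_nat_numeral)
  have r7: "T 4 3 0 = T 3 3 1 + T 4 2 1"
    using T_rec[of 3 2 0] tt_summ by (simp add: eval_nat_numeral)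
  have s1: "T 1 2 4 = T 2 1 4" by (rule T_swap)
  have s2: "T 2 3 2 = T 3 2 2" by (rule T_swap)
  have b: "T 4 3 0 = L 4 * L 3" by (rule T_bd) auto
  have g1': "sigma 4 3 = 2 ^ 4 * T 3 0 4" by (rule sigma_T, rule tt_summ) auto
  have g2': "sigma 3 4 = 2 ^ 3 * T 4 0 3" by (rule sigma_T, rule tt_summ) auto
  have g1: "sigma 4 3 = 16 * T 3 0 4" using g1' by simp
  have g2: "sigma 3 4 = 8 * T 4 0 3" using g2' by simp
  have l: "dlambda 2 = L 2" "dlambda 3 = L 3" "dlambda 4 = L 4" "dlambda 5 = L 5" "dlambda 7 = L 7"
    by (simp_all add: dlambda_L)
  have b': "T 4 3 0 = L 3 * L 4" using b by (simp add: mult.commute)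
  show ?thesis unfolding l g1 g2
    using r1 r2 r3 r4 r5 r6 r7 s1 s2 b' T331 T223 unfolding mult.assoc by (intro conjI; linarith)
qed


end
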